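(* Let $G=(V,E)$ be a finite, connected, simple graph with at least two vertices and generic weights $(w_x)_{x\in\Sigma}$, $\Sigma=V\cup E$; let $M$ be the ground state and $x\in\Sigma$. Suppose the weight of some $y\in\Sigma$ is increased or decreased by $\varepsilon<F_G(x)$, the resulting weights being generic, and let $\tilde M$ be the ground state for the new weights. Then $x\notin M\,\Delta\,\tilde M$.
   Context: A matching of $G$ is a set $M\subset\Sigma$ such that every vertex either belongs to $M$ or is an endpoint of exactly one edge of $M$, but not both. $H(M)=\sum_{z\in M}w_z$; the ground state is the matching minimising $H$. Weights are generic if no nontrivial integer combination of finitely many weights vanishes. For $x\in\Sigma$, $M_{G,x,1}$ (resp. $M_{G,x,0}$) is the matching of minimal weight among those containing $x$ (resp. not containing $x$). The transition point is $K_{G,x}=H(M_{G,x,0})-H(M_{G,x,1})+w_x$ and the flexibility of $x$ is $F_G(x)=|K_{G,x}-w_x|$; all computed with the original weights. *)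

theory Defs
  imports Complex_Main
begin

definition simple_graph :: "'a set \<Rightarrow> 'a set set \<Rightarrow> bool" where
  "simple_graph V E \<longleftrightarrow> finite V \<and> (\<forall>e\<in>E. e \<subseteq> V \<and> card e = 2)"

definition connected_graph :: "'a set \<Rightarrow> 'a set set \<Rightarrow> bool" where
  "connected_graph V E \<longleftrightarrow>
     (\<forall>u\<in>V. \<forall>v\<in>V. (\<lambda>a b. {a, b} \<in> E)\<^sup>*\<^sup>* u v)"

definition Sigma_set :: "'a set \<Rightarrow> 'a set set \<Rightarrow> ('a + 'a set) set" where
  "Sigma_set V E = Inl ` V \<union> Inr ` E"

fun covers :: "('a + 'a set) \<Rightarrow> 'a \<Rightarrow> bool" where
  "covers (Inl u) v = (u = v)"
| "covers (Inr e) v = (v \<in> e)"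

text \<open>Matching (monomer-dimer covering): every vertex lies in exactly one element of M,
  either as a monomer (the vertex itself) or as an endpoint of an edge of M.\<close>
definition is_matching :: "'a set \<Rightarrow> 'a set set \<Rightarrow> ('a + 'a set) set \<Rightarrow> bool" where
  "is_matching V E M \<longleftrightarrow> M \<subseteq> Sigma_set V E \<and>
     (\<forall>v\<in>V. card {z\<in>M. covers z v} = 1)"

definition H :: "(('a + 'a set) \<Rightarrow> real) \<Rightarrow> ('a + 'a set) set \<Rightarrow> real" where
  "H w M = (\<Sum>z\<in>M. w z)"

definition ground_state :: "'a set \<Rightarrow> 'a set set \<Rightarrow> (('a + 'a set) \<Rightarrow> real)
    \<Rightarrow> ('a + 'a set) set \<Rightarrow> bool" where
  "ground_state V E w M \<longleftrightarrow> is_matching V E M \<and>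
     (\<forall>M'. is_matching V E M' \<longrightarrow> H w M \<le> H w M')"

definition generic :: "'a set \<Rightarrow> 'a set set \<Rightarrow> (('a + 'a set) \<Rightarrow> real) \<Rightarrow> bool" where
  "generic V E w \<longleftrightarrow> (\<forall>c :: ('a + 'a set) \<Rightarrow> int.
      (\<exists>z\<in>Sigma_set V E. c z \<noteq> 0) \<longrightarrow> (\<Sum>z\<in>Sigma_set V E. of_int (c z) * w z) \<noteq> 0)"

definition H_with :: "'a set \<Rightarrow> 'a set set \<Rightarrow> (('a + 'a set) \<Rightarrow> real) \<Rightarrow> ('a + 'a set) \<Rightarrow> real" where
  "H_with V E w x = Min {H w M | M. is_matching V E M \<and> x \<in> M}"

definition H_without :: "'a set \<Rightarrow> 'a set set \<Rightarrow> (('a + 'a set) \<Rightarrow> real) \<Rightarrow> ('a + 'a set) \<Rightarrow> real" where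
  "H_without V E w x = Min {H w M | M. is_matching V E M \<and> x \<notin> M}"

definition transition_point :: "'a set \<Rightarrow> 'a set set \<Rightarrow> (('a + 'a set) \<Rightarrow> real) \<Rightarrow> ('a + 'a set) \<Rightarrow> real" where
  "transition_point V E w x = H_without V E w x - H_with V E w x + w x"

definition flexibility :: "'a set \<Rightarrow> 'a set set \<Rightarrow> (('a + 'a set) \<Rightarrow> real) \<Rightarrow> ('a + 'a set) \<Rightarrow> real" where
  "flexibility V E w x = \<bar>transition_point V E w x - w x\<bar>"

end

theory Submission
  imports Defs
begin

lemma H_upd:
  assumes "finite N"
  shows "H (w(y := a)) N = H w N + (if y \<in> N then a - w y else 0)"
proof (cases "y \<in> N")
  case True
  have "H (w(y := a)) N = (w(y := a)) y + (\<Sum>z\<in>N - {y}. (w(y := a)) z)"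
    unfolding H_def using assms True by (simp add: sum.remove)
  also have "(\<Sum>z\<in>N - {y}. (w(y := a)) z) = (\<Sum>z\<in>N - {y}. w z)"
    by (rule sum.cong) auto
  also have "H w N = w y + (\<Sum>z\<in>N - {y}. w z)"
    unfolding H_def using assms True by (simp add: sum.remove)
  ultimately show ?thesis using True unfolding fun_upd_def by simp
next
  case False
  have "H (w(y := a)) N = H w N"
    unfolding H_def by (rule sum.cong) (use False in auto)
  then show ?thesis using False by simp
qed

lemma finite_Sigma:
  assumes "simple_graph V E" shows "finite (Sigma_set V E)"
proof -
  have "finite V" using assms by (simp add: simple_graph_def)
  moreover have "E \<subseteq> Pow V" using assms by (auto simp: simple_graph_def)
  ultimately have "finite E" by (meson finite_Pow_iff finite_subset)
  then show ?thesis using \<open>finite V\<close> by (simp add: Sigma_set_def)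
qed

lemma finite_Hset:
  assumes "simple_graph V E"
  shows "finite {H w M | M. is_matching V E M \<and> P M}"
proof -
  have "{H w M | M. is_matching V E M \<and> P M} \<subseteq> H w ` Pow (Sigma_set V E)"
    by (auto simp: is_matching_def)
  then show ?thesis using finite_Sigma[OF assms] by (meson finite_Pow_iff finite_imageI finite_subset)
qed

theorem lemma2p11:
  fixes V :: "'a set" and E :: "'a set set" and w :: "('a + 'a set) \<Rightarrow> real"
    and x y :: "'a + 'a set" and M M' :: "('a + 'a set) set" and \<epsilon> :: real and s :: real
  assumes "simple_graph V E" and "connected_graph V E" and "card V \<ge> 2"
    and "generic V E w"
    and "ground_state V E w M"
    and "x \<in> Sigma_set V E" and "y \<in> Sigma_set V E"
    and "\<epsilon> \<ge> 0" and "\<epsilon> < flexibility V E w x"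
    and "s = 1 \<or> s = -1"
    and "generic V E (w(y := w y + s * \<epsilon>))"
    and "ground_state V E (w(y := w y + s * \<epsilon>)) M'"
  shows "x \<notin> (M - M') \<union> (M' - M)"
proof
  assume xin: "x \<in> (M - M') \<union> (M' - M)"
  let ?w' = "w(y := w y + s * \<epsilon>)"
  have mM: "is_matching V E M" and minM: "\<And>N. is_matching V E N \<Longrightarrow> H w M \<le> H w N"
    using assms(5) by (auto simp: ground_state_def)
  have mM': "is_matching V E M'" and minM': "H ?w' M' \<le> H ?w' M"
    using assms(12) mM by (auto simp: ground_state_def)
  have finM: "finite M" using mM finite_Sigma[OF assms(1)]
    by (auto simp: is_matching_def intro: finite_subset)
  have finM': "finite M'" using mM' finite_Sigma[OF assms(1)]
    by (auto simp: is_matching_def intro: finite_subset)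
  have "H w M' + (if y \<in> M' then w y + s * \<epsilon> - w y else 0) \<le> H w M + (if y \<in> M then w y + s * \<epsilon> - w y else 0)"
    using minM' H_upd[OF finM, of w y "w y + s * \<epsilon>"] H_upd[OF finM', of w y "w y + s * \<epsilon>"]
    by linarith
  then have diff: "H w M' - H w M \<le> \<epsilon>" using assms(8,10) by (auto split: if_splits)
  let ?S1 = "{H w N | N. is_matching V E N \<and> x \<in> N}"
  let ?S0 = "{H w N | N. is_matching V E N \<and> x \<notin> N}"
  have f1: "finite ?S1" and f0: "finite ?S0" using finite_Hset[OF assms(1)] by auto
  have F: "flexibility V E w x = \<bar>Min ?S0 - Min ?S1\<bar>"
    by (simp add: flexibility_def transition_point_def H_with_def H_without_def)
  show False
  proof (cases "x \<in> M")
    case True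
    then have xM': "x \<notin> M'" using xin by auto
    have a: "Min ?S1 \<le> H w M" using f1 True mM by (intro Min_le) auto
    have b: "Min ?S0 \<le> H w M'" using f0 xM' mM' by (intro Min_le) auto
    have ne: "?S0 \<noteq> {}" using xM' mM' by auto
    have c: "H w M \<le> Min ?S0" using f0 ne minM by (subst Min_ge_iff) auto
    have ne1: "?S1 \<noteq> {}" using True mM by auto
    have d: "H w M \<le> Min ?S1" using f1 ne1 minM by (subst Min_ge_iff) auto
    have "flexibility V E w x \<le> \<epsilon>" using F a b c d diff by simp
    then show False using assms(9) by simp
  next
    case False
    then have xM': "x \<in> M'" using xin by auto
    have a: "Min ?S0 \<le> H w M" using f0 False mM by (intro Min_le) auto
    have b: "Min ?S1 \<le> H w M'" using f1 xM' mM' by (intro Min_le) auto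
    have ne: "?S1 \<noteq> {}" using xM' mM' by auto
    have c: "H w M \<le> Min ?S1" using f1 ne minM by (subst Min_ge_iff) auto
    have ne1: "?S0 \<noteq> {}" using False mM by auto
    have d: "H w M \<le> Min ?S0" using f0 ne1 minM by (subst Min_ge_iff) auto
    have "flexibility V E w x \<le> \<epsilon>" using F a b c d diff by simp
    then show False using assms(9) by simp
  qed
qed

end
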